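(* There is no $x\in\mathbb{R}\setminus\mathbb{Q}$ whose Jacobi sequence contains four consecutive terms $-1,1,1,-1$; that is, there is no $k\ge0$ with $\left(\frac{s_k}{t_k}\right)=-1$, $\left(\frac{s_{k+1}}{t_{k+1}}\right)=\left(\frac{s_{k+2}}{t_{k+2}}\right)=1$, $\left(\frac{s_{k+3}}{t_{k+3}}\right)=-1$. In particular, there is no $x\in\mathbb{R}\setminus\mathbb{Q}$ whose Jacobi sequence is eventually periodic with repeating block $1,1,-1$.
   Context: For $x\in\mathbb{R}\setminus\mathbb{Q}$ with regular continued fraction expansion $x=[a_0,a_1,a_2,\ldots]$, the convergents $s_k/t_k$ are defined by $s_{-1}=1$, $s_0=a_0$, $s_k=a_ks_{k-1}+s_{k-2}$ and $t_{-1}=0$, $t_0=1$, $t_k=a_kt_{k-1}+t_{k-2}$ for $k\ge1$. For an odd natural number $n$ and an integer $m$ coprime to $n$, $\left(\frac{m}{n}\right)$ is the usual Jacobi symbol (equal to $1$ if $n=1$); if $n$ is even and $\gcd(m,n)=1$, one sets $\left(\frac{m}{n}\right)=*$, a fixed symbol different from $\pm1$. The Jacobi sequence of $x$ is $\left(\frac{s_k}{t_k}\right)$, $k\ge 0$. *)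

theory Defs
  imports Complex_Main "HOL-Number_Theory.Number_Theory"
begin

fun cf_rem :: "real \<Rightarrow> nat \<Rightarrow> real" where
  "cf_rem x 0 = x"
| "cf_rem x (Suc n) = 1 / frac (cf_rem x n)"

definition cf_a :: "real \<Rightarrow> nat \<Rightarrow> int" where
  "cf_a x n = \<lfloor>cf_rem x n\<rfloor>"

text \<open>Convergent numerators s_k and denominators t_k, with s_(-1) = 1, t_(-1) = 0.\<close>
fun cf_s :: "real \<Rightarrow> nat \<Rightarrow> int" where
  "cf_s x 0 = cf_a x 0"
| "cf_s x (Suc 0) = cf_a x 1 * cf_a x 0 + 1"
| "cf_s x (Suc (Suc n)) = cf_a x (n + 2) * cf_s x (Suc n) + cf_s x n"

fun cf_t :: "real \<Rightarrow> nat \<Rightarrow> int" where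
  "cf_t x 0 = 1"
| "cf_t x (Suc 0) = cf_a x 1"
| "cf_t x (Suc (Suc n)) = cf_a x (n + 2) * cf_t x (Suc n) + cf_t x n"

text \<open>Jacobi symbol (m/n) for odd positive n (equal to 1 for n = 1).\<close>
definition Jacobi :: "int \<Rightarrow> int \<Rightarrow> int" where
  "Jacobi m n = (\<Prod>p\<in>prime_factors n. Legendre m p ^ multiplicity p n)"

text \<open>Jacobi sequence: Some (s_k/t_k) if t_k is odd, None (the symbol *) if t_k is even.\<close>
definition jacobi_seq :: "real \<Rightarrow> nat \<Rightarrow> int option" where
  "jacobi_seq x k = (if odd (cf_t x k) then Some (Jacobi (cf_s x k) (cf_t x k)) else None)"

end

theory Submission
  imports Defs
begin


lemma Jacobi_mset: "Jacobi m n = prod_mset (image_mset (\<lambda>p. Legendre m p) (prime_factorization n))"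
  unfolding Jacobi_def image_prod_mset_multiplicity
  by (intro prod.cong) (auto simp: count_prime_factorization in_prime_factors_iff)

lemma Jacobi_1 [simp]: "Jacobi m 1 = 1"
  by (simp add: Jacobi_def)

lemma Jacobi_prime: "prime (p::int) \<Longrightarrow> Jacobi m p = Legendre m p"
  by (simp add: Jacobi_mset prime_factorization_prime)

lemma Jacobi_mult_den: "a \<noteq> 0 \<Longrightarrow> b \<noteq> 0 \<Longrightarrow> Jacobi m (a*b) = Jacobi m a * Jacobi m b"
  by (simp add: Jacobi_mset prime_factorization_mult)

lemma pos_induct:
  fixes P :: "int \<Rightarrow> bool"
  assumes "P 1" "\<And>p. prime p \<Longrightarrow> P p" "\<And>a b. a > 0 \<Longrightarrow> b > 0 \<Longrightarrow> P a \<Longrightarrow> P b \<Longrightarrow> P (a*b)"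
    and "n > 0"
  shows "P n"
proof -
  have "\<forall>n. n > 0 \<longrightarrow> nat n = k \<longrightarrow> P n" for k
  proof (induction k rule: less_induct)
    case (less k)
    show ?case
    proof (intro allI impI)
      fix n :: int assume n: "n > 0" "nat n = k"
      show "P n"
      proof (cases "n = 1")
        case True then show ?thesis using assms(1) by simp
      next
        case False
        then have "\<not> is_unit n" using n by auto
        then obtain p where p: "p dvd n" "prime p" using prime_divisor_exists[of n] n by auto
        then have pp: "p > 1" using prime_gt_1_int by blast
        obtain c where c: "n = p * c" using p by blast
        have c0: "c > 0" using c n pp by (simp add: zero_less_mult_iff)
        have "c < n" using c pp c0 by (simp add: mult_less_cancel_right1)
        then have "nat c < k" using n c0 by linarith
        then have "P c" using less.IH c0 by blast
        then show ?thesis using assms(2,3) p c c0 pp by auto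
      qed
    qed
  qed
  then show ?thesis using assms(4) by blast
qed



definition chi4 :: "int \<Rightarrow> int" where "chi4 n = (if n mod 4 = 3 then -1 else 1)"
definition rsgn :: "int \<Rightarrow> int \<Rightarrow> int" where
  "rsgn m n = (if m mod 4 = 3 \<and> n mod 4 = 3 then -1 else 1)"

lemma Legendre_vals: "Legendre a p \<in> {-1,0,1}"
  by (simp add: Legendre_def)

lemma small_cong_eq:
  fixes x y p :: int
  assumes "x \<in> {-1,0,1}" "y \<in> {-1,0,1}" "[x = y] (mod p)" "p > 2"
  shows "x = y"
proof -
  have "p dvd (x - y)" using assms(3) by (simp add: cong_iff_dvd_diff)
  then obtain c where c: "x - y = p * c" by blast
  have "\<bar>x - y\<bar> \<le> 2" using assms(1,2) by auto
  then have "\<bar>p * c\<bar> \<le> 2" using c by simp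
  have "c = 0"
  proof (rule ccontr)
    assume "c \<noteq> 0"
    then have "\<bar>c\<bar> \<ge> 1" by simp
    then have "p * \<bar>c\<bar> \<ge> p" using assms(4) by simp
    then have "\<bar>p * c\<bar> \<ge> p" using assms(4) by (simp add: abs_mult)
    then show False using \<open>\<bar>p * c\<bar> \<le> 2\<close> assms(4) by linarith
  qed
  then show ?thesis using c by simp
qed

lemma euler_int:
  assumes "prime (p::int)" "p > 2"
  shows "[Legendre a p = a ^ nat ((p - 1) div 2)] (mod p)"
proof -
  have "prime (nat p)" "2 < nat p" using assms by auto
  from euler_criterion[OF this, of a] have "[Legendre a (int (nat p)) = a ^ ((nat p - 1) div 2)] (mod int (nat p))" .
  moreover have "(nat p - 1) div 2 = nat ((p - 1) div 2)" using assms by (simp add: nat_div_distrib nat_diff_distrib)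
  ultimately show ?thesis using assms by simp
qed

lemma Legendre_cong: "[a = b] (mod p) \<Longrightarrow> Legendre a p = Legendre b p"
proof -
  assume h: "[a = b] (mod p)"
  have 1: "[a = 0] (mod p) \<longleftrightarrow> [b = 0] (mod p)"
    using h cong_sym cong_trans by blast
  have 2: "[y^2 = a] (mod p) \<longleftrightarrow> [y^2 = b] (mod p)" for y
    using h cong_sym cong_trans by blast
  show ?thesis unfolding Legendre_def QuadRes_def using 1 2 by simp
qed

lemma Legendre_mult:
  assumes "prime p" "p > 2"
  shows "Legendre (a*b) p = Legendre a p * Legendre b p"
proof -
  have "[Legendre (a*b) p = (a*b) ^ nat ((p - 1) div 2)] (mod p)" using euler_int assms by blast
  moreover have "[Legendre a p * Legendre b p = a ^ nat ((p - 1) div 2) * b ^ nat ((p - 1) div 2)] (mod p)"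
    using euler_int[OF assms] cong_mult by blast
  ultimately have "[Legendre (a*b) p = Legendre a p * Legendre b p] (mod p)"
    by (metis cong_sym cong_trans power_mult_distrib)
  moreover have "Legendre a p * Legendre b p \<in> {-1,0,1}"
    using Legendre_vals[of a p] Legendre_vals[of b p] by auto
  ultimately show ?thesis using small_cong_eq Legendre_vals assms(2) by blast
qed

lemma neg1_pow: "odd (p::int) \<Longrightarrow> p > 0 \<Longrightarrow> (-1::int) ^ nat ((p - 1) div 2) = chi4 p"
proof -
  assume "odd p" "p > 0"
  then have m: "p mod 2 = 1" by (simp add: odd_iff_mod_2_eq_one)
  define q where "q = p div 4"
  have q0: "q \<ge> 0" using \<open>p > 0\<close> by (simp add: q_def)
  have "p = 4*q + 1 \<or> p = 4*q + 3" using m unfolding q_def by presburger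
  then show ?thesis
  proof
    assume a: "p = 4*q + 1"
    then have "nat ((p - 1) div 2) = 2 * nat q" using q0 by simp
    moreover have "p mod 4 = 1" using a by simp
    ultimately show ?thesis by (simp add: chi4_def)
  next
    assume a: "p = 4*q + 3"
    then have "nat ((p - 1) div 2) = Suc (2 * nat q)" using q0 by simp
    moreover have "p mod 4 = 3" using a by simp
    ultimately show ?thesis by (simp add: chi4_def)
  qed
qed

lemma Legendre_neg1:
  assumes "prime p" "p > 2"
  shows "Legendre (-1) p = chi4 p"
proof -
  have c: "[Legendre (-1) p = (-1) ^ nat ((p - 1) div 2)] (mod p)" using euler_int assms by blast
  have "odd p" using assms by (metis prime_odd_int)
  then have e: "(-1::int) ^ nat ((p - 1) div 2) = chi4 p" using neg1_pow assms by simp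
  have "chi4 p \<in> {-1,0,1}" by (simp add: chi4_def)
  then show ?thesis using small_cong_eq[OF Legendre_vals _ _ assms(2)] c e by simp
qed

lemma Legendre_one: "prime p \<Longrightarrow> Legendre 1 p = 1"
proof -
  assume "prime p"
  then have "p > 1" using prime_gt_1_int by blast
  then have "\<not> [1 = 0] (mod p)" by (simp add: cong_def)
  moreover have "QuadRes p 1" unfolding QuadRes_def by (rule exI[of _ 1]) simp
  ultimately show ?thesis by (simp add: Legendre_def)
qed



lemma odd_prime_factor:
  fixes n p :: int
  assumes "odd n" "p \<in> prime_factors n"
  shows "prime p" "p > 2" "p dvd n"
proof -
  show "prime p" "p dvd n" using assms(2) by auto
  then have "p \<ge> 2" using prime_ge_2_int by blast
  moreover have "p \<noteq> 2" using assms(1) \<open>p dvd n\<close> by auto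
  ultimately show "p > 2" by simp
qed

lemma Jacobi_mult_num:
  assumes "odd n"
  shows "Jacobi (a*b) n = Jacobi a n * Jacobi b n"
proof -
  have "Jacobi (a*b) n = (\<Prod>p\<in>prime_factors n. (Legendre a p * Legendre b p) ^ multiplicity p n)"
    unfolding Jacobi_def
    by (intro prod.cong refl) (simp add: Legendre_mult odd_prime_factor[OF assms])
  also have "\<dots> = Jacobi a n * Jacobi b n"
    unfolding Jacobi_def power_mult_distrib prod.distrib ..
  finally show ?thesis .
qed

lemma Jacobi_cong:
  assumes "[a = b] (mod n)"
  shows "Jacobi a n = Jacobi b n"
  unfolding Jacobi_def
proof (intro prod.cong refl)
  fix p assume "p \<in> prime_factors n"
  then have "p dvd n" by auto
  then have "[a = b] (mod p)" using assms cong_dvd_modulus by blast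
  then show "Legendre a p ^ multiplicity p n = Legendre b p ^ multiplicity p n"
    using Legendre_cong by simp
qed

lemma Jacobi_one [simp]: "Jacobi 1 n = 1"
  unfolding Jacobi_def by (intro prod.neutral) (auto simp: Legendre_one in_prime_factors_iff)

lemma chi4_mult: "odd a \<Longrightarrow> odd b \<Longrightarrow> chi4 (a*b) = chi4 a * chi4 b"
proof -
  assume "odd a" "odd b"
  then have "a mod 4 = 1 \<or> a mod 4 = 3" "b mod 4 = 1 \<or> b mod 4 = 3"
    by (simp_all add: odd_iff_mod_2_eq_one) presburger+
  moreover have "(a*b) mod 4 = ((a mod 4) * (b mod 4)) mod 4" by (simp add: mod_mult_eq)
  ultimately show ?thesis unfolding chi4_def by auto
qed

lemma rsgn_alt: "rsgn m n = (if m mod 4 = 3 then chi4 n else 1)"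
  by (simp add: rsgn_def chi4_def)

lemma rsgn_sym: "rsgn m n = rsgn n m"
  by (auto simp add: rsgn_def)

lemma chi4_eq: "odd a \<Longrightarrow> (chi4 a = -1) = (a mod 4 = 3)"
  by (simp add: chi4_def)

lemma rsgn_mult: "odd a \<Longrightarrow> odd b \<Longrightarrow> rsgn (a*b) n = rsgn a n * rsgn b n"
proof -
  assume o: "odd a" "odd b"
  have "rsgn m n = (if n mod 4 = 3 then chi4 m else 1)" for m by (simp add: rsgn_def chi4_def)
  then show ?thesis using chi4_mult[OF o] by simp
qed

lemma Jacobi_neg1:
  assumes "n > 0" "odd n"
  shows "Jacobi (-1) n = chi4 n"
proof -
  have "odd n \<longrightarrow> Jacobi (-1) n = chi4 n"
  proof (rule pos_induct[OF _ _ _ assms(1)])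
    show "odd 1 \<longrightarrow> Jacobi (- 1) 1 = chi4 1" by (simp add: chi4_def)
  next
    fix p :: int assume p: "prime p"
    show "odd p \<longrightarrow> Jacobi (- 1) p = chi4 p"
    proof
      assume "odd p"
      then have "p \<noteq> 2" by auto
      then have "p > 2" using prime_ge_2_int[OF p] by simp
      then show "Jacobi (- 1) p = chi4 p" using Jacobi_prime[OF p] Legendre_neg1[OF p] by simp
    qed
  next
    fix a b :: int assume ab: "a > 0" "b > 0" "odd a \<longrightarrow> Jacobi (- 1) a = chi4 a"
      "odd b \<longrightarrow> Jacobi (- 1) b = chi4 b"
    show "odd (a*b) \<longrightarrow> Jacobi (- 1) (a*b) = chi4 (a*b)"
      using ab by (auto simp: Jacobi_mult_den chi4_mult)
  qed
  then show ?thesis using assms by simp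
qed

lemma neg1_pow_chi: "(-1::int) ^ k = (if even k then 1 else -1)"
  by simp

lemma recip_prime_prime:
  assumes p: "prime p" "p > 2" and q: "prime q" "q > 2" and "p \<noteq> q"
  shows "Legendre q p * Legendre p q = rsgn p q"
proof -
  have "Legendre p q * Legendre q p = (-1::int) ^ (nat ((p - 1) div 2 * ((q - 1) div 2)))"
    using Quadratic_Reciprocity_int[of p q] assms by simp
  also have "nat ((p - 1) div 2 * ((q - 1) div 2)) = nat ((p - 1) div 2) * nat ((q - 1) div 2)"
    using assms by (simp add: nat_mult_distrib)
  also have "(-1::int) ^ (nat ((p - 1) div 2) * nat ((q - 1) div 2))
      = ((-1) ^ nat ((p - 1) div 2)) ^ nat ((q - 1) div 2)" by (simp add: power_mult)
  also have "\<dots> = chi4 p ^ nat ((q - 1) div 2)"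
    using neg1_pow[of p] p prime_odd_int by auto
  also have "\<dots> = rsgn p q"
  proof (cases "p mod 4 = 3")
    case True
    then have "chi4 p = -1" by (simp add: chi4_def)
    then show ?thesis using neg1_pow[of q] q prime_odd_int True by (simp add: rsgn_alt)
  next
    case False
    then show ?thesis by (simp add: chi4_def rsgn_alt)
  qed
  finally show ?thesis by (simp add: mult.commute)
qed

lemma recip_stepA:
  assumes p: "prime p" "p > 2" and n: "n > 0" "odd n" "\<not> p dvd n"
  shows "Legendre n p * Jacobi p n = rsgn p n"
proof -
  have "odd n \<and> \<not> p dvd n \<longrightarrow> Legendre n p * Jacobi p n = rsgn p n"
  proof (rule pos_induct[OF _ _ _ n(1)])
    show "odd 1 \<and> \<not> p dvd 1 \<longrightarrow> Legendre 1 p * Jacobi p 1 = rsgn p 1"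
      using Legendre_one[OF p(1)] by (simp add: rsgn_def)
  next
    fix q :: int assume q: "prime q"
    show "odd q \<and> \<not> p dvd q \<longrightarrow> Legendre q p * Jacobi p q = rsgn p q"
    proof
      assume h: "odd q \<and> \<not> p dvd q"
      then have "q \<noteq> 2" by auto
      then have "q > 2" using prime_ge_2_int[OF q] by simp
      moreover have "p \<noteq> q" using h by auto
      ultimately show "Legendre q p * Jacobi p q = rsgn p q"
        using recip_prime_prime[OF p q] Jacobi_prime[OF q] by simp
    qed
  next
    fix a b :: int assume ab: "a > 0" "b > 0"
      "odd a \<and> \<not> p dvd a \<longrightarrow> Legendre a p * Jacobi p a = rsgn p a"
      "odd b \<and> \<not> p dvd b \<longrightarrow> Legendre b p * Jacobi p b = rsgn p b"
    show "odd (a*b) \<and> \<not> p dvd (a*b) \<longrightarrow> Legendre (a*b) p * Jacobi p (a*b) = rsgn p (a*b)"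
    proof
      assume h: "odd (a*b) \<and> \<not> p dvd (a*b)"
      then have h2: "odd a" "odd b" "\<not> p dvd a" "\<not> p dvd b" by auto
      have "Legendre (a*b) p * Jacobi p (a*b) = (Legendre a p * Jacobi p a) * (Legendre b p * Jacobi p b)"
        using Legendre_mult[OF p] Jacobi_mult_den[of a b p] ab by simp
      also have "\<dots> = rsgn a p * rsgn b p" using ab h2 by (simp add: rsgn_sym)
      also have "\<dots> = rsgn (a*b) p" using rsgn_mult h2 by simp
      finally show "Legendre (a*b) p * Jacobi p (a*b) = rsgn p (a*b)" by (simp add: rsgn_sym)
    qed
  qed
  then show ?thesis using n by simp
qed

lemma Jacobi_reciprocity:
  assumes m: "m > 0" "odd m" and n: "n > 0" "odd n" and c: "coprime m n"
  shows "Jacobi m n * Jacobi n m = rsgn m n"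
proof -
  have "odd m \<and> coprime m n \<longrightarrow> Jacobi m n * Jacobi n m = rsgn m n"
  proof (rule pos_induct[OF _ _ _ m(1)])
    show "odd 1 \<and> coprime 1 n \<longrightarrow> Jacobi 1 n * Jacobi n 1 = rsgn 1 n"
      by (simp add: rsgn_def)
  next
    fix p :: int assume p: "prime p"
    show "odd p \<and> coprime p n \<longrightarrow> Jacobi p n * Jacobi n p = rsgn p n"
    proof
      assume h: "odd p \<and> coprime p n"
      then have "p \<noteq> 2" by auto
      then have "p > 2" using prime_ge_2_int[OF p] by simp
      moreover have "\<not> p dvd n" using h p
        by (meson coprime_absorb_left not_prime_unit)
      ultimately show "Jacobi p n * Jacobi n p = rsgn p n"
        using recip_stepA[OF p _ n] Jacobi_prime[OF p] by (simp add: mult.commute)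
    qed
  next
    fix a b :: int assume ab: "a > 0" "b > 0"
      "odd a \<and> coprime a n \<longrightarrow> Jacobi a n * Jacobi n a = rsgn a n"
      "odd b \<and> coprime b n \<longrightarrow> Jacobi b n * Jacobi n b = rsgn b n"
    show "odd (a*b) \<and> coprime (a*b) n \<longrightarrow> Jacobi (a*b) n * Jacobi n (a*b) = rsgn (a*b) n"
    proof
      assume h: "odd (a*b) \<and> coprime (a*b) n"
      then have h2: "odd a" "odd b" "coprime a n" "coprime b n" by auto
      have "Jacobi (a*b) n * Jacobi n (a*b) = (Jacobi a n * Jacobi n a) * (Jacobi b n * Jacobi n b)"
        using Jacobi_mult_num[OF n(2)] Jacobi_mult_den[of a b n] ab by simp
      also have "\<dots> = rsgn a n * rsgn b n" using ab h2 by simp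
      also have "\<dots> = rsgn (a*b) n" using rsgn_mult h2 by simp
      finally show "Jacobi (a*b) n * Jacobi n (a*b) = rsgn (a*b) n" .
    qed
  qed
  then show ?thesis using m c by simp
qed



lemma cf_rem_irrat: "x \<notin> \<rat> \<Longrightarrow> cf_rem x n \<notin> \<rat>"
proof (induction n)
  case 0 then show ?case by simp
next
  case (Suc n)
  let ?y = "cf_rem x n"
  show ?case
  proof
    assume "cf_rem x (Suc n) \<in> \<rat>"
    then have "1 / frac ?y \<in> \<rat>" by simp
    then have "1 / (1 / frac ?y) \<in> \<rat>" by (rule Rats_divide[OF Rats_1])
    then have "frac ?y \<in> \<rat>" by simp
    then have "of_int \<lfloor>?y\<rfloor> + frac ?y \<in> \<rat>" by (intro Rats_add) auto
    then have "?y \<in> \<rat>" by (simp add: frac_def)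
    then show False using Suc by simp
  qed
qed

lemma cf_a_pos: assumes "x \<notin> \<rat>" "n \<ge> 1" shows "cf_a x n \<ge> 1"
proof -
  obtain m where m: "n = Suc m" using assms(2) by (cases n) auto
  let ?y = "cf_rem x m"
  have "?y \<notin> \<rat>" using cf_rem_irrat assms(1) by blast
  then have "?y \<notin> \<int>" using Ints_subset_Rats by blast
  then have "frac ?y \<noteq> 0" by (simp add: frac_eq_0_iff)
  then have f: "0 < frac ?y" "frac ?y < 1" using frac_ge_0[of ?y] frac_lt_1[of ?y] by auto
  then have "1 / frac ?y \<ge> 1" by simp
  then show ?thesis unfolding cf_a_def m by simp
qed

lemma cf_t_pos: assumes "x \<notin> \<rat>" shows "cf_t x n \<ge> 1"
proof -
  have "cf_t x n \<ge> 1 \<and> cf_t x (Suc n) \<ge> 1"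
  proof (induction n)
    case 0 then show ?case using cf_a_pos[OF assms, of 1] by simp
  next
    case (Suc n)
    have a: "cf_a x (n + 2) \<ge> 1" using cf_a_pos[OF assms] by simp
    have "1 * 1 \<le> cf_a x (n + 2) * cf_t x (Suc n)" using a Suc
      by (intro mult_mono) auto
    then show ?case using Suc by simp
  qed
  then show ?thesis by simp
qed

lemma cf_det: "cf_s x (Suc n) * cf_t x n - cf_s x n * cf_t x (Suc n) = (-1)^n"
proof (induction n)
  case 0 then show ?case by simp
next
  case (Suc n)
  have "cf_s x (Suc (Suc n)) * cf_t x (Suc n) - cf_s x (Suc n) * cf_t x (Suc (Suc n))
      = -(cf_s x (Suc n) * cf_t x n - cf_s x n * cf_t x (Suc n))"
    by (simp add: algebra_simps)
  then show ?case using Suc by simp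
qed

lemma pair:
  assumes x: "x \<notin> \<rat>" and o: "odd (cf_t x k)" "odd (cf_t x (k+1))"
  shows "Jacobi (cf_s x k) (cf_t x k) * Jacobi (cf_s x (k+1)) (cf_t x (k+1))
     = rsgn (cf_t x k) (cf_t x (k+1)) * (if even k then chi4 (cf_t x k) else chi4 (cf_t x (k+1)))"
proof -
  define A where "A = cf_s x k"
  define B where "B = cf_t x k"
  define C where "C = cf_s x (k+1)"
  define D where "D = cf_t x (k+1)"
  define e where "e = (-1::int)^k"
  have det: "C * B - A * D = e" using cf_det[of x k] by (simp add: A_def B_def C_def D_def e_def)
  have B0: "B > 0" and D0: "D > 0" using cf_t_pos[OF x] by (auto simp: B_def D_def intro: order.strict_trans2[OF zero_less_one])
  have oB: "odd B" and oD: "odd D" using o by (simp_all add: B_def D_def)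
  have "C * B - e = A * D" using det by linarith
  then have c1: "[C * B = e] (mod D)" unfolding cong_iff_dvd_diff by simp
  have "A * D - (-e) = C * B" using det by linarith
  then have c2: "[A * D = -e] (mod B)" unfolding cong_iff_dvd_diff by simp
  have cop: "coprime B D"
  proof -
    have "gcd B D dvd C * B - A * D" by simp
    then have "gcd B D dvd e" using det by simp
    then have "is_unit (gcd B D)" unfolding e_def by (cases "even k") auto
    then show ?thesis using is_unit_gcd by blast
  qed
  have r: "Jacobi B D * Jacobi D B = rsgn B D"
    using Jacobi_reciprocity[OF B0 oB D0 oD cop] .
  have rr: "rsgn B D * rsgn B D = 1" by (simp add: rsgn_def)
  have j1: "Jacobi C D * Jacobi B D = Jacobi e D"
    using Jacobi_mult_num[OF oD] Jacobi_cong[OF c1] by simp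
  have j2: "Jacobi A B * Jacobi D B = Jacobi (-e) B"
    using Jacobi_mult_num[OF oB] Jacobi_cong[OF c2] by simp
  have "Jacobi A B * Jacobi C D * rsgn B D = (Jacobi C D * Jacobi B D) * (Jacobi A B * Jacobi D B)"
    using r by (simp add: algebra_simps)
  also have "\<dots> = Jacobi e D * Jacobi (-e) B" using j1 j2 by simp
  finally have h: "Jacobi A B * Jacobi C D * rsgn B D = Jacobi e D * Jacobi (-e) B" .
  have "Jacobi A B * Jacobi C D = Jacobi A B * Jacobi C D * (rsgn B D * rsgn B D)" using rr by simp
  also have "\<dots> = rsgn B D * (Jacobi A B * Jacobi C D * rsgn B D)" by (simp add: algebra_simps)
  finally have "Jacobi A B * Jacobi C D = rsgn B D * (Jacobi e D * Jacobi (-e) B)" using h by simp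
  moreover have "Jacobi e D * Jacobi (-e) B = (if even k then chi4 B else chi4 D)"
    using Jacobi_neg1[OF B0 oB] Jacobi_neg1[OF D0 oD] by (simp add: e_def)
  ultimately show ?thesis by (simp add: A_def B_def C_def D_def)
qed



lemma pair2:
  assumes x: "x \<notin> \<rat>" and "jacobi_seq x j = Some u" "jacobi_seq x (Suc j) = Some w"
  shows "u * w = rsgn (cf_t x j) (cf_t x (Suc j)) * (if even j then chi4 (cf_t x j) else chi4 (cf_t x (Suc j)))"
proof -
  have o: "odd (cf_t x j)" "odd (cf_t x (j+1))" and v: "Jacobi (cf_s x j) (cf_t x j) = u"
    "Jacobi (cf_s x (j+1)) (cf_t x (j+1)) = w"
    using assms(2,3) unfolding jacobi_seq_def by (auto split: if_splits)
  show ?thesis using pair[OF x o] v by simp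
qed

lemma final_cases:
  fixes t0 t1 t2 t3 :: int
  assumes "-1 * 1 = rsgn t0 t1 * (if even k then chi4 t0 else chi4 t1)"
    "1 * 1 = rsgn t1 t2 * (if even (Suc k) then chi4 t1 else chi4 t2)"
    "1 * (-1) = rsgn t2 t3 * (if even (Suc (Suc k)) then chi4 t2 else chi4 t3)"
  shows False
  using assms by (cases "even k") (auto simp: rsgn_def chi4_def split: if_splits)

lemma no_pattern:
  assumes x: "x \<notin> \<rat>"
  shows "\<not> (jacobi_seq x k = Some (-1) \<and> jacobi_seq x (k + 1) = Some 1
              \<and> jacobi_seq x (k + 2) = Some 1 \<and> jacobi_seq x (k + 3) = Some (-1))"
proof
  assume h: "jacobi_seq x k = Some (-1) \<and> jacobi_seq x (k + 1) = Some 1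
              \<and> jacobi_seq x (k + 2) = Some 1 \<and> jacobi_seq x (k + 3) = Some (-1)"
  have e: "k + 1 = Suc k" "k + 2 = Suc (Suc k)" "k + 3 = Suc (Suc (Suc k))" by simp_all
  have h': "jacobi_seq x k = Some (-1)" "jacobi_seq x (Suc k) = Some 1"
     "jacobi_seq x (Suc (Suc k)) = Some 1" "jacobi_seq x (Suc (Suc (Suc k))) = Some (-1)"
    using h unfolding e by auto
  show False
    by (rule final_cases[OF pair2[OF x h'(1) h'(2)] pair2[OF x h'(2) h'(3)] pair2[OF x h'(3) h'(4)]])
qed


theorem theorem9:
  fixes x :: real
  assumes "x \<notin> \<rat>"
  shows "\<not> (\<exists>k. jacobi_seq x k = Some (-1) \<and> jacobi_seq x (k + 1) = Some 1
              \<and> jacobi_seq x (k + 2) = Some 1 \<and> jacobi_seq x (k + 3) = Some (-1))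
         \<and> \<not> (\<exists>N. \<forall>k\<ge>N. jacobi_seq x k = Some ([1, 1, -1] ! ((k - N) mod 3)))"
proof
  show "\<not> (\<exists>k. jacobi_seq x k = Some (-1) \<and> jacobi_seq x (k + 1) = Some 1
              \<and> jacobi_seq x (k + 2) = Some 1 \<and> jacobi_seq x (k + 3) = Some (-1))"
    using no_pattern[OF assms] by blast
next
  show "\<not> (\<exists>N. \<forall>k\<ge>N. jacobi_seq x k = Some ([1, 1, -1] ! ((k - N) mod 3)))"
  proof
    assume "\<exists>N. \<forall>k\<ge>N. jacobi_seq x k = Some ([1, 1, -1] ! ((k - N) mod 3))"
    then obtain N where N: "\<forall>k\<ge>N. jacobi_seq x k = Some ([1, 1, -1] ! ((k - N) mod 3))" by blast
    have e: "N+2+1 = N+3" "N+2+2 = N+4" "N+2+3 = N+5" by simp_all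
    have "jacobi_seq x (N+2) = Some (-1)" using N[rule_format, of "N+2"] by simp
    moreover have "jacobi_seq x (N+3) = Some 1" using N[rule_format, of "N+3"] by simp
    moreover have "jacobi_seq x (N+4) = Some 1" using N[rule_format, of "N+4"] by simp
    moreover have "jacobi_seq x (N+5) = Some (-1)" using N[rule_format, of "N+5"] by simp
    ultimately show False using no_pattern[OF assms, of "N+2"] unfolding e by blast
  qed
qed

end
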